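(* Let $\Bbbk$ be a field of characteristic zero, let $d\ge 2$ be an integer, and let $A$ be a vector space over $\Bbbk$ (of arbitrary, possibly infinite, dimension) equipped with a symmetric $d$-linear map $\mu: A^d\to A$. If $A$ is Yagzhev nil, then $A$ is Engel. More precisely, if $A$ is Yagzhev nil of nilindex $p$, then $A$ is $n$-Engel for $$n = d\left\lfloor \frac{p-2}{d-1}\right\rfloor + 1.$$
   Context: The map $\mu$ is symmetric: $\mu(x_1,\dots,x_d)=\mu(x_{\sigma(1)},\dots,x_{\sigma(d)})$ for all $\sigma\in S_d$ and all $x_i\in A$. For $x,y\in A$ define $\mathrm{ad}_x(y)=\mu(x,\dots,x,y)$ (with $d-1$ copies of $x$), $\mathrm{ad}_x^1=\mathrm{ad}_x$, and $\mathrm{ad}_x^{k+1}(y)=\mu(x,\dots,x,\mathrm{ad}_x^k(y))$. The algebra $(A,\mu)$ is called $n$-Engel if $\mathrm{ad}_x^n(y)=0$ for all $x,y\in A$, and Engel if it is $n$-Engel for some positive integer $n$. Define maps $T_q:A\to A$ for positive integers $q$ recursively by $T_1(x)=x$ and, for $q>1$, $T_q(x)=\sum \mu(T_{i_1}(x),\dots,T_{i_d}(x))$, where the sum runs over all $d$-tuples $(i_1,\dots,i_d)$ of positive integers with $i_1+\dots+i_d=q$. The algebra $A$ is called Yagzhev nil of nilindex $p$ (for a positive integer $p$) if $T_q(x)=0$ for all $x\in A$ and all integers $q\ge p$; it is called Yagzhev nil if it is Yagzhev nil of nilindex $p$ for some $p$. *)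

theory Defs
  imports Complex_Main "HOL-Combinatorics.Permutations"
begin

text \<open>A d-ary operation on A is modelled as a function on lists; only lists of
length d are relevant.\<close>

definition symmetric_multilinear ::
  "('k::field \<Rightarrow> 'a::ab_group_add \<Rightarrow> 'a) \<Rightarrow> nat \<Rightarrow> ('a list \<Rightarrow> 'a) \<Rightarrow> bool" where
  "symmetric_multilinear scale d \<mu> \<longleftrightarrow>
     (\<forall>xs. length xs = d \<longrightarrow> (\<forall>i<d. Vector_Spaces.linear scale scale (\<lambda>v. \<mu> (xs[i := v])))) \<and>
     (\<forall>xs \<sigma>. length xs = d \<longrightarrow> \<sigma> permutes {..<d} \<longrightarrow>
        \<mu> (map (\<lambda>i. xs ! \<sigma> i) [0..<d]) = \<mu> xs)"

definition ad :: "('a list \<Rightarrow> 'a) \<Rightarrow> nat \<Rightarrow> 'a \<Rightarrow> 'a \<Rightarrow> 'a" where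
  "ad \<mu> d x y = \<mu> (replicate (d - 1) x @ [y])"

definition n_engel :: "('a::zero list \<Rightarrow> 'a) \<Rightarrow> nat \<Rightarrow> nat \<Rightarrow> bool" where
  "n_engel \<mu> d n \<longleftrightarrow> (\<forall>x y. (ad \<mu> d x ^^ n) y = 0)"

definition engel :: "('a::zero list \<Rightarrow> 'a) \<Rightarrow> nat \<Rightarrow> bool" where
  "engel \<mu> d \<longleftrightarrow> (\<exists>n>0. n_engel \<mu> d n)"

text \<open>T_q(x); entries of the tuples are restricted to be < q, which is automatic
when d \<ge> 2 (and makes the recursion well-founded). T_0 is an unused dummy.\<close>
function Tmap :: "('a::comm_monoid_add list \<Rightarrow> 'a) \<Rightarrow> nat \<Rightarrow> nat \<Rightarrow> 'a \<Rightarrow> 'a" where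
  "Tmap \<mu> d q x =
    (if q = 0 then 0 else if q = 1 then x else
     (\<Sum>is \<in> {is. length is = d \<and> (\<forall>i\<in>set is. 0 < i \<and> i < q) \<and> sum_list is = q}.
        \<mu> (map (\<lambda>i. Tmap \<mu> d i x) is)))"
  by pat_completeness auto
termination by (relation "measure (\<lambda>(\<mu>, d, q, x). q)") auto

definition yagzhev_nil_of_nilindex :: "('a::comm_monoid_add list \<Rightarrow> 'a) \<Rightarrow> nat \<Rightarrow> nat \<Rightarrow> bool" where
  "yagzhev_nil_of_nilindex \<mu> d p \<longleftrightarrow> 0 < p \<and> (\<forall>x q. p \<le> q \<longrightarrow> Tmap \<mu> d q x = 0)"

definition yagzhev_nil :: "('a::comm_monoid_add list \<Rightarrow> 'a) \<Rightarrow> nat \<Rightarrow> bool" where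
  "yagzhev_nil \<mu> d \<longleftrightarrow> (\<exists>p. yagzhev_nil_of_nilindex \<mu> d p)"

end

theory Submission
  imports Defs "HOL-Library.Function_Algebras"
begin


lemma sum_fun_apply: "(\<Sum>i\<in>I. f i) x = (\<Sum>i\<in>I. f i x)"
  by (induct I rule: infinite_finite_induct) auto

definition mlin :: "('k::field \<Rightarrow> 'a::ab_group_add \<Rightarrow> 'a) \<Rightarrow> ('a list \<Rightarrow> 'a) \<Rightarrow> nat \<Rightarrow> bool" where
  "mlin scale g r \<longleftrightarrow> (\<forall>xs. length xs = r \<longrightarrow> (\<forall>i<r. module_hom scale scale (\<lambda>v. g (xs[i := v]))))"

fun cmul :: "('a list \<Rightarrow> 'a) \<Rightarrow> (nat \<Rightarrow> 'a) list \<Rightarrow> nat \<Rightarrow> 'a::comm_monoid_add" where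
  "cmul g [] n = (if n = 0 then g [] else 0)"
| "cmul g (P # Ps) n = (\<Sum>i\<le>n. cmul (\<lambda>xs. g (P i # xs)) Ps (n - i))"

definition ev :: "('k::field \<Rightarrow> 'a \<Rightarrow> 'a) \<Rightarrow> 'k \<Rightarrow> nat \<Rightarrow> (nat \<Rightarrow> 'a) \<Rightarrow> 'a::comm_monoid_add" where
  "ev scale c N V = (\<Sum>n\<le>N. scale (c ^ n) (V n))"

definition bnd :: "nat \<Rightarrow> (nat \<Rightarrow> 'a::zero) \<Rightarrow> bool" where
  "bnd B V \<longleftrightarrow> (\<forall>n>B. V n = 0)"

definition Tup :: "nat \<Rightarrow> nat \<Rightarrow> nat list set" where
  "Tup r n = {js. length js = r \<and> sum_list js = n}"

lemma mlin_Cons: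
  fixes g :: "'a::ab_group_add list \<Rightarrow> 'a" and scale :: "'k::field \<Rightarrow> 'a \<Rightarrow> 'a"
  assumes "mlin scale g (Suc r)"
  shows "mlin scale (\<lambda>xs. g (a # xs)) r"
  unfolding mlin_def
proof (intro allI impI)
  fix xs :: "'a list" and i assume "length xs = r" "i < r"
  have "\<forall>ys. length ys = Suc r \<longrightarrow> (\<forall>i<Suc r. module_hom scale scale (\<lambda>v. g (ys[i := v])))"
    using assms unfolding mlin_def .
  from this[rule_format, of "a # xs" "Suc i"] \<open>length xs = r\<close> \<open>i < r\<close>
  have "module_hom scale scale (\<lambda>v. g ((a # xs)[Suc i := v]))" by simp
  then show "module_hom scale scale (\<lambda>v. g (a # xs[i := v]))" by simp
qed

lemma mlin_hd:
  assumes "mlin scale g (Suc r)" "length xs = r"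
  shows "module_hom scale scale (\<lambda>v. g (v # xs))"
proof -
  have "\<forall>i<Suc r. module_hom scale scale (\<lambda>v. g ((0 # xs)[i := v]))"
    using assms unfolding mlin_def by (metis length_Cons)
  from this[rule_format, of 0] have "module_hom scale scale (\<lambda>v. g ((0 # xs)[0 := v]))" by simp
  then show ?thesis by simp
qed

lemma mlin_zero:
  assumes "mlin scale g r" "length xs = r" "k < r" "xs ! k = 0"
  shows "g xs = 0"
proof -
  have "module_hom scale scale (\<lambda>v. g (xs[k := v]))"
    using assms unfolding mlin_def by auto
  then have "g (xs[k := 0]) = 0" using module_hom.zero by fastforce
  then show ?thesis using assms by (metis list_update_id)
qed

lemma cmul_zero_fun:
  "(\<forall>xs. length xs = length Ps \<longrightarrow> g xs = 0) \<Longrightarrow> cmul g Ps n = 0"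
  by (induct Ps arbitrary: g n) auto

lemma finite_Tup: "finite (Tup r n)"
proof -
  have "Tup r n \<subseteq> {js. set js \<subseteq> {..n} \<and> length js = r}"
    unfolding Tup_def using member_le_sum_list by fastforce
  then show ?thesis using finite_lists_length_eq[of "{..n}" r] finite_subset by auto
qed

lemma Tup_Suc: "Tup (Suc r) n = (\<lambda>(i, js). i # js) ` (SIGMA i:{..n}. Tup r (n - i))"
proof (intro set_eqI iffI)
  fix js assume "js \<in> Tup (Suc r) n"
  then obtain i js' where "js = i # js'" "length js' = r" "i + sum_list js' = n"
    unfolding Tup_def by (cases js) auto
  then show "js \<in> (\<lambda>(i, js). i # js) ` (SIGMA i:{..n}. Tup r (n - i))"
    unfolding Tup_def by force
qed (auto simp: Tup_def)

lemma cmul_tup: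
  "cmul g Ps n = (\<Sum>js\<in>Tup (length Ps) n. g (map (\<lambda>k. (Ps ! k) (js ! k)) [0..<length Ps]))"
proof (induct Ps arbitrary: g n)
  case Nil
  have "Tup 0 n = (if n = 0 then {[]} else {})" unfolding Tup_def by auto
  then show ?case by simp
next
  case (Cons P Ps)
  have inj: "inj_on (\<lambda>(i, js). i # js) (SIGMA i:{..n}. Tup (length Ps) (n - i))"
    by (auto simp: inj_on_def)
  have "(\<Sum>js\<in>Tup (length (P # Ps)) n. g (map (\<lambda>k. ((P # Ps) ! k) (js ! k)) [0..<length (P # Ps)]))
      = (\<Sum>(i, js)\<in>(SIGMA i:{..n}. Tup (length Ps) (n - i)).
            g (map (\<lambda>k. ((P # Ps) ! k) ((i # js) ! k)) [0..<Suc (length Ps)]))"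
    unfolding length_Cons Tup_Suc sum.reindex[OF inj] by (simp add: case_prod_unfold del: upt_Suc)
  also have "\<dots> = (\<Sum>(i, js)\<in>(SIGMA i:{..n}. Tup (length Ps) (n - i)).
            g (P i # map (\<lambda>k. (Ps ! k) (js ! k)) [0..<length Ps]))"
    by (rule sum.cong) (auto simp: upt_conv_Cons map_Suc_upt[symmetric] comp_def simp del: upt_Suc)
  also have "\<dots> = (\<Sum>i\<le>n. \<Sum>js\<in>Tup (length Ps) (n - i). g (P i # map (\<lambda>k. (Ps ! k) (js ! k)) [0..<length Ps]))"
    by (subst sum.Sigma) (auto simp: finite_Tup)
  also have "\<dots> = cmul g (P # Ps) n"
    by (simp add: Cons)
  finally show ?case by simp
qed



lemma cmul_nz:
  fixes g :: "'a::ab_group_add list \<Rightarrow> 'a" and scale :: "'k::field \<Rightarrow> 'a \<Rightarrow> 'a"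
  assumes "mlin scale g (length Ps)" "cmul g Ps n \<noteq> 0"
  shows "\<exists>js. length js = length Ps \<and> sum_list js = n \<and> (\<forall>k<length Ps. (Ps ! k) (js ! k) \<noteq> 0)"
proof -
  from assms(2) obtain js where js: "js \<in> Tup (length Ps) n"
    and nz: "g (map (\<lambda>k. (Ps ! k) (js ! k)) [0..<length Ps]) \<noteq> 0"
    unfolding cmul_tup by (meson sum.not_neutral_contains_not_neutral)
  have "\<forall>k<length Ps. (Ps ! k) (js ! k) \<noteq> 0"
  proof (intro allI impI notI)
    fix k assume "k < length Ps" "(Ps ! k) (js ! k) = 0"
    then have "g (map (\<lambda>k. (Ps ! k) (js ! k)) [0..<length Ps]) = 0"
      by (intro mlin_zero[OF assms(1)]) auto
    with nz show False by simp
  qed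
  with js show ?thesis unfolding Tup_def by auto
qed

lemma sum_list_le_bound:
  assumes "\<forall>k<length js. js ! k \<le> (B::nat)"
  shows "sum_list js \<le> B * length js"
proof -
  have "sum_list js = (\<Sum>k\<in>{0..<length js}. js ! k)" by (rule sum_list_sum_nth)
  also have "\<dots> \<le> of_nat (card {0..<length js}) * B"
    by (rule sum_bounded_above) (use assms in auto)
  finally show ?thesis by (simp add: mult.commute)
qed

lemma bnd_cmul:
  fixes g :: "'a::ab_group_add list \<Rightarrow> 'a" and scale :: "'k::field \<Rightarrow> 'a \<Rightarrow> 'a"
  assumes "mlin scale g (length Ps)" "\<forall>P\<in>set Ps. bnd B P"
  shows "bnd (B * length Ps) (cmul g Ps)"
  unfolding bnd_def
proof (intro allI impI; rule ccontr)
  fix n assume n: "B * length Ps < n" "cmul g Ps n \<noteq> 0"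
  then obtain js where js: "length js = length Ps" "sum_list js = n"
    "\<forall>k<length Ps. (Ps ! k) (js ! k) \<noteq> 0"
    using cmul_nz[OF assms(1)] by blast
  have "\<forall>k<length js. js ! k \<le> B"
  proof (intro allI impI)
    fix k assume "k < length js"
    then have "bnd B (Ps ! k)" "(Ps ! k) (js ! k) \<noteq> 0" using assms(2) js by auto
    then show "js ! k \<le> B" unfolding bnd_def using not_le by blast
  qed
  from sum_list_le_bound[OF this] js n show False by simp
qed

lemma tri:
  fixes N :: nat
  shows "(\<Sum>n\<le>N. \<Sum>i\<le>n. F i (n - i)) = (\<Sum>i\<le>N. \<Sum>j\<le>N - i. (F i j :: 'a::comm_monoid_add))"
proof -
  have "(\<Sum>n\<le>N. \<Sum>i\<le>n. F i (n - i)) = (\<Sum>(i,j)\<in>{(i,j). i + j \<le> N}. F i j)"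
    by (rule sum.triangle_reindex_eq[symmetric])
  also have "{(i,j). i + j \<le> N} = Sigma {..N} (\<lambda>i. {..N - i})" by auto
  also have "(\<Sum>(i,j)\<in>Sigma {..N} (\<lambda>i. {..N - i}). F i j) = (\<Sum>i\<le>N. \<Sum>j\<le>N - i. F i j)"
    by (rule sum.Sigma[symmetric]) auto
  finally show ?thesis .
qed

lemma ev_ext:
  assumes vs: "vector_space scale" and "bnd B V" "B \<le> N"
  shows "ev scale c N V = ev scale c B V"
  unfolding ev_def
proof (rule sum.mono_neutral_cong_right)
  interpret vector_space scale by (rule vs)
  show "\<forall>i\<in>{..N} - {..B}. scale (c ^ i) (V i) = 0"
    using assms unfolding bnd_def
    by (metis Diff_iff atMost_iff not_le scale_zero_right)
qed (use assms in auto)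



lemma ev_add:
  assumes vs: "vector_space scale"
  shows "ev scale c N (V + W) = ev scale c N V + ev scale c N W"
proof -
  interpret vector_space scale by (rule vs)
  show ?thesis unfolding ev_def by (simp add: scale_right_distrib sum.distrib)
qed

lemma ev_diff:
  assumes vs: "vector_space scale"
  shows "ev scale c N (V - W) = ev scale c N V - ev scale c N W"
proof -
  interpret vector_space scale by (rule vs)
  show ?thesis unfolding ev_def by (simp add: scale_right_diff_distrib sum_subtractf)
qed

lemma ev_sum:
  assumes vs: "vector_space scale"
  shows "ev scale c N (\<Sum>i\<in>I. F i) = (\<Sum>i\<in>I. ev scale c N (F i))"
proof -
  interpret vector_space scale by (rule vs)
  show ?thesis unfolding ev_def sum_fun_apply scale_sum_right by (rule sum.swap)
qed

lemma ev_hom: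
  fixes g :: "'a::ab_group_add list \<Rightarrow> 'a" and scale :: "'k::field \<Rightarrow> 'a \<Rightarrow> 'a"
  assumes vs: "vector_space scale"
  shows "mlin scale g (length Ps) \<Longrightarrow> \<forall>P\<in>set Ps. bnd B P \<Longrightarrow> B * length Ps \<le> N \<Longrightarrow>
     ev scale c N (cmul g Ps) = g (map (ev scale c N) Ps)"
proof (induct Ps arbitrary: g N)
  case Nil
  interpret vector_space scale by (rule vs)
  have h1: "ev scale c N (cmul g []) = (\<Sum>n\<le>N. if n = 0 then g [] else 0)"
    unfolding ev_def by (rule sum.cong) auto
  have h2: "(\<Sum>n\<le>N. if n = 0 then g [] else 0) = g []" by (simp add: sum.delta)
  show ?case by (simp only: h1 h2 list.map)
next
  case (Cons P Ps)
  interpret vector_space scale by (rule vs)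
  let ?r = "map (ev scale c N) Ps"
  let ?g = "\<lambda>i xs. g (P i # xs)"
  have mP: "mlin scale (?g i) (length Ps)" for i using mlin_Cons Cons.prems(1) by simp
  have bP: "bnd B P" and bPs: "\<forall>Q\<in>set Ps. bnd B Q" using Cons.prems(2) by auto
  have hd: "module_hom scale scale (\<lambda>v. g (v # ?r))"
    using mlin_hd[of scale g "length Ps" ?r] Cons.prems(1) by simp
  have key: "scale (c ^ i) (ev scale c (N - i) (cmul (?g i) Ps)) = scale (c ^ i) (g (P i # ?r))"
    if "i \<le> N" for i
  proof (cases "i \<le> B")
    case True
    then have le: "B * length Ps \<le> N - i" using Cons.prems(3) by (simp add: algebra_simps)
    have "ev scale c (N - i) (cmul (?g i) Ps) = g (P i # map (ev scale c (N - i)) Ps)"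
      using Cons.hyps[OF mP bPs le] .
    also have "map (ev scale c (N - i)) Ps = ?r"
    proof (rule map_cong[OF refl])
      fix Q assume Q: "Q \<in> set Ps"
      then have "B \<le> N - i" using le by (cases Ps) auto
      then show "ev scale c (N - i) Q = ev scale c N Q"
        using ev_ext[OF vs] bPs Q by (metis diff_le_self le_trans)
    qed
    finally show ?thesis by simp
  next
    case False
    then have P0: "P i = 0" using bP unfolding bnd_def by auto
    have z: "\<forall>xs. length xs = length Ps \<longrightarrow> ?g i xs = 0"
      using P0 mlin_hd[of scale g "length Ps"] Cons.prems(1) module_hom.zero by fastforce
    have "cmul (?g i) Ps = (\<lambda>_. 0)" using cmul_zero_fun[OF z] by auto
    then have "ev scale c (N - i) (cmul (?g i) Ps) = 0" unfolding ev_def by simp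
    moreover have "g (P i # ?r) = 0" using z by simp
    ultimately show ?thesis by simp
  qed
  have "ev scale c N (cmul g (P # Ps)) = (\<Sum>n\<le>N. \<Sum>i\<le>n. scale (c ^ i) (scale (c ^ (n - i)) (cmul (?g i) Ps (n - i))))"
    unfolding ev_def cmul.simps scale_sum_right
    by (intro sum.cong refl) (simp add: power_add[symmetric])
  also have "\<dots> = (\<Sum>i\<le>N. \<Sum>j\<le>N - i. scale (c ^ i) (scale (c ^ j) (cmul (?g i) Ps j)))"
    by (rule tri)
  also have "\<dots> = (\<Sum>i\<le>N. scale (c ^ i) (ev scale c (N - i) (cmul (?g i) Ps)))"
    unfolding ev_def scale_sum_right ..
  also have "\<dots> = (\<Sum>i\<le>N. scale (c ^ i) (g (P i # ?r)))"
    using key by (intro sum.cong) auto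
  also have "\<dots> = (\<Sum>i\<le>N. g (scale (c ^ i) (P i) # ?r))"
    using module_hom.scale[OF hd] by simp
  also have "\<dots> = g (ev scale c N P # ?r)"
    using module_hom.sum[OF hd, of "\<lambda>i. scale (c^i) (P i)" "{..N}"]
    by (simp add: ev_def[of scale c N P])
  finally show ?case by (simp del: cmul.simps)
qed

lemma poly_zero:
  fixes scale :: "'k::field_char_0 \<Rightarrow> 'a::ab_group_add \<Rightarrow> 'a"
  assumes vs: "vector_space scale"
  shows "\<forall>c::'k. c \<noteq> 0 \<longrightarrow> (\<Sum>n\<le>N. scale (c ^ n) (V n)) = 0 \<Longrightarrow> \<forall>n\<le>N. V n = 0"
proof (induct N arbitrary: V)
  case 0
  interpret vector_space scale by (rule vs)
  from 0[rule_format, of 1] show ?case by simp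
next
  case (Suc N)
  interpret vector_space scale by (rule vs)
  define V' where "V' n = scale ((2::'k) ^ n - 2 ^ Suc N) (V n)" for n
  let ?f = "\<lambda>c. (\<Sum>n\<le>Suc N. scale (c ^ n) (V n))"
  have "(\<Sum>n\<le>N. scale (c ^ n) (V' n)) = 0" if c: "c \<noteq> 0" for c :: 'k
  proof -
    have "?f (2 * c) - scale (2 ^ Suc N) (?f c) = (\<Sum>n\<le>Suc N. scale (c ^ n * (2 ^ n - 2 ^ Suc N)) (V n))"
      unfolding scale_sum_right sum_subtractf[symmetric]
      by (intro sum.cong refl) (simp add: algebra_simps power_mult_distrib)
    also have "\<dots> = (\<Sum>n\<le>N. scale (c ^ n) (V' n))"
      by (simp add: V'_def)
    finally have "(\<Sum>n\<le>N. scale (c ^ n) (V' n)) = ?f (2 * c) - scale (2 ^ Suc N) (?f c)" by simp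
    also have "\<dots> = 0"
    proof -
      have "?f (2 * c) = 0" by (intro Suc.prems[rule_format]) (simp add: c)
      moreover have "?f c = 0" by (intro Suc.prems[rule_format]) (simp add: c)
      ultimately show ?thesis by simp
    qed
    finally show ?thesis .
  qed
  then have V'0: "\<forall>n\<le>N. V' n = 0" using Suc.hyps by blast
  have V0: "V n = 0" if "n \<le> N" for n
  proof -
    have "(2::'k) ^ n \<noteq> 2 ^ Suc N"
    proof
      assume "(2::'k) ^ n = 2 ^ Suc N"
      then have "(of_nat (2 ^ n) :: 'k) = of_nat (2 ^ Suc N)" by simp
      then have "(2::nat) ^ n = 2 ^ Suc N" using of_nat_eq_iff by blast
      then show False using that
        by (metis Suc_le_eq nat_less_le power_inject_exp one_less_numeral_iff semiring_norm(76))
    qed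
    then have ne: "(2::'k) ^ n - 2 ^ Suc N \<noteq> 0" by simp
    have "scale ((2::'k) ^ n - 2 ^ Suc N) (V n) = 0" using V'0 that unfolding V'_def by blast
    then show ?thesis using ne by simp
  qed
  have "?f 1 = 0" using Suc.prems[rule_format, of 1] by simp
  then have "V (Suc N) = 0" using V0 by simp
  with V0 show ?case by (auto simp: le_Suc_eq)
qed



declare Tmap.simps[simp del]

lemma Tmap_0[simp]: "Tmap \<mu> d 0 x = 0" by (subst Tmap.simps) simp
lemma Tmap_1[simp]: "Tmap \<mu> d (Suc 0) x = x" by (subst Tmap.simps) simp
lemma Tmap_ge2: "2 \<le> q \<Longrightarrow> Tmap \<mu> d q x =
   (\<Sum>is \<in> {is. length is = d \<and> (\<forall>i\<in>set is. 0 < i \<and> i < q) \<and> sum_list is = q}.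
        \<mu> (map (\<lambda>i. Tmap \<mu> d i x) is))"
  by (subst Tmap.simps) simp

lemma poly_zero_fun:
  fixes scale :: "'k::field_char_0 \<Rightarrow> 'a::ab_group_add \<Rightarrow> 'a"
  assumes vs: "vector_space scale" and b: "bnd N V" and z: "\<forall>c. ev scale c N V = 0"
  shows "V = 0"
proof
  fix n
  have "\<forall>n\<le>N. V n = 0"
    using poly_zero[OF vs] z unfolding ev_def by blast
  then show "V n = 0 n" using b unfolding bnd_def by (cases "n \<le> N") auto
qed

lemma map_idx: "length js = r \<Longrightarrow> map (\<lambda>k. f (js ! k)) [0..<r] = map f js"
  by (rule nth_equalityI) auto

lemma map_idx_rep: "length js = r \<Longrightarrow> map (\<lambda>k. (replicate r Y ! k) (js ! k)) [0..<r] = map Y js"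
  by (rule nth_equalityI) auto

lemma sum_list_ge_length: "\<forall>i\<in>set js. 1 \<le> i \<Longrightarrow> length js \<le> sum_list (js :: nat list)"
  by (induct js) auto

lemma sum_list_ge_elem:
  assumes "\<forall>i\<in>set js. 1 \<le> i" "i \<in> set js" "2 \<le> length js"
  shows "i + 1 \<le> sum_list (js :: nat list)"
proof -
  have "sum_list js = i + sum_list (remove1 i js)"
    using sum_list_map_remove1[OF assms(2), of id] by simp
  moreover have "length (remove1 i js) \<le> sum_list (remove1 i js)"
    using assms(1) notin_set_remove1 sum_list_ge_length by (metis in_set_remove1 le_less)
  moreover have "1 \<le> length (remove1 i js)" using assms(2,3) by (simp add: length_remove1)
  ultimately show ?thesis by simp
qed

lemma zero_in_tuple:
  fixes \<mu> :: "'a::ab_group_add list \<Rightarrow> 'a" and scale :: "'k::field \<Rightarrow> 'a \<Rightarrow> 'a"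
  assumes "mlin scale \<mu> d" "length js = d" "0 \<in> set js" "Y 0 = 0"
  shows "\<mu> (map Y js) = 0"
proof -
  obtain k where k: "k < length js" "js ! k = 0" using assms(3) by (metis in_set_conv_nth)
  show ?thesis by (rule mlin_zero[OF assms(1), of _ k]) (use assms k in auto)
qed

lemma A_level:
  fixes scale :: "'k::field \<Rightarrow> 'a::ab_group_add \<Rightarrow> 'a"
  assumes vs: "vector_space scale" and d2: "2 \<le> d" and ml: "mlin scale \<mu> d"
    and p1: "1 \<le> p" and nil: "\<forall>q\<ge>p. Tmap \<mu> d q u = 0"
  shows "(\<Sum>q<p. Tmap \<mu> d q u) = u + \<mu> (replicate d (\<Sum>q<p. Tmap \<mu> d q u))"
proof -
  interpret vector_space scale by (rule vs)
  define Y where "Y q = Tmap \<mu> d q u" for q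
  have Y0: "Y 0 = 0" unfolding Y_def by simp
  have Y1: "Y 1 = u" unfolding Y_def by simp
  have C0: "cmul \<mu> (replicate d Y) q = (\<Sum>js\<in>Tup d q. \<mu> (map Y js))" for q
    unfolding cmul_tup by (intro sum.cong refl) (auto simp: Tup_def map_idx_rep)
  have C: "cmul \<mu> (replicate d Y) q = (if 2 \<le> q then Y q else 0)" for q
  proof (cases "2 \<le> q")
    case True
    let ?I = "{is. length is = d \<and> (\<forall>i\<in>set is. 0 < i \<and> i < q) \<and> sum_list is = q}"
    have "Y q = (\<Sum>js\<in>?I. \<mu> (map Y js))"
      unfolding Y_def using True by (simp add: Tmap_ge2)
    also have "\<dots> = (\<Sum>js\<in>Tup d q. \<mu> (map Y js))"
    proof (rule sum.mono_neutral_left)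
      show "finite (Tup d q)" by (rule finite_Tup)
      show "?I \<subseteq> Tup d q" unfolding Tup_def by auto
      show "\<forall>js\<in>Tup d q - ?I. \<mu> (map Y js) = 0"
      proof
        fix js assume js: "js \<in> Tup d q - ?I"
        show "\<mu> (map Y js) = 0"
        proof (cases "0 \<in> set js")
          case True
          then show ?thesis using zero_in_tuple[of scale \<mu> d js Y, OF ml _ _ Y0] js unfolding Tup_def by auto
        next
          case False
          then have pos: "\<forall>i\<in>set js. 1 \<le> i" by (metis less_one not_le)
          from js False obtain i where i: "i \<in> set js" "q \<le> i" unfolding Tup_def
            by (auto simp: not_less)
          have "i + 1 \<le> sum_list js" by (rule sum_list_ge_elem[OF pos i(1)]) (use js d2 in \<open>auto simp: Tup_def\<close>)
          then show ?thesis using i js unfolding Tup_def by auto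
        qed
      qed
    qed
    finally show ?thesis using True C0 by simp
  next
    case False
    have "\<forall>js\<in>Tup d q. \<mu> (map Y js) = 0"
    proof
      fix js assume js: "js \<in> Tup d q"
      have "0 \<in> set js"
      proof (rule ccontr)
        assume "0 \<notin> set js"
        then have "\<forall>i\<in>set js. 1 \<le> i" by (metis less_one not_le)
        from sum_list_ge_length[OF this] js d2 False show False unfolding Tup_def by auto
      qed
      then show "\<mu> (map Y js) = 0" using zero_in_tuple[of scale \<mu> d js Y, OF ml _ _ Y0] js unfolding Tup_def by auto
    qed
    then show ?thesis using False C0 by simp
  qed
  define N where "N = p * d"
  have bY: "bnd p Y" unfolding bnd_def Y_def using nil by auto
  have N1: "1 \<le> N" "p \<le> N" using p1 d2 unfolding N_def by (simp_all add: Suc_le_eq)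
  have evY: "ev scale 1 N Y = (\<Sum>q<p. Tmap \<mu> d q u)"
  proof -
    have "ev scale 1 N Y = (\<Sum>n\<le>N. Y n)" unfolding ev_def by simp
    also have "\<dots> = (\<Sum>n<p. Y n)"
    proof (rule sum.mono_neutral_right)
      show "\<forall>i\<in>{..N} - {..<p}. Y i = 0" using nil unfolding Y_def by auto
    qed (use N1 in auto)
    finally show ?thesis unfolding Y_def by simp
  qed
  have "ev scale 1 N (cmul \<mu> (replicate d Y)) = \<mu> (map (ev scale 1 N) (replicate d Y))"
    by (rule ev_hom[OF vs]) (use ml bY in \<open>auto simp: N_def\<close>)
  then have E: "ev scale 1 N (cmul \<mu> (replicate d Y)) = \<mu> (replicate d (\<Sum>q<p. Tmap \<mu> d q u))"
    using evY by simp
  have "ev scale 1 N Y = (\<Sum>n\<le>N. (if n = 1 then Y n else 0) + cmul \<mu> (replicate d Y) n)"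
    unfolding ev_def C using Y0 by (intro sum.cong refl) (auto simp: not_le less_2_cases_iff)
  also have "\<dots> = u + ev scale 1 N (cmul \<mu> (replicate d Y))"
    unfolding sum.distrib using N1 Y1 by (simp add: ev_def)
  finally show ?thesis using E evY by simp
qed



lemma comb_sp:
  fixes d M :: nat
  shows "length is = length js \<Longrightarrow> \<forall>k<length is. \<exists>a b c. a + b + c = is ! k \<and> js ! k = a + d * b + M * c
   \<Longrightarrow> \<exists>a b c. a + b + c = sum_list is \<and> sum_list js = a + d * b + M * c"
proof (induct "is" js rule: list_induct2)
  case Nil
  then show ?case by auto
next
  case (Cons i "is" j js)
  from Cons.prems[rule_format, of 0] obtain a b c where h: "a + b + c = i" "j = a + d * b + M * c" by auto
  have "\<forall>k<length is. \<exists>a b c. a + b + c = is ! k \<and> js ! k = a + d * b + M * c"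
    using Cons.prems by fastforce
  from Cons.hyps(2)[OF this] obtain a' b' c' where h': "a' + b' + c' = sum_list is"
    "sum_list js = a' + d * b' + M * c'" by auto
  show ?case
    by (rule exI[of _ "a + a'"], rule exI[of _ "b + b'"], rule exI[of _ "c + c'"])
       (use h h' in \<open>simp add: algebra_simps\<close>)
qed

lemma comb_dvd:
  fixes e :: nat
  shows "\<forall>i\<in>set is. 1 \<le> i \<and> e dvd (i - 1) \<Longrightarrow> e dvd (sum_list is - length is) \<and> length is \<le> sum_list is"
proof (induct "is")
  case (Cons i "is")
  then have h: "e dvd (sum_list is - length is)" "length is \<le> sum_list is" "1 \<le> i" "e dvd (i - 1)" by auto
  have eq: "sum_list (i # is) - length (i # is) = (i - 1) + (sum_list is - length is)" using h by simp
  have "e dvd (i - 1) + (sum_list is - length is)" using dvd_add[OF h(4) h(1)] .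
  then have "e dvd sum_list (i # is) - length (i # is)" using eq by metis
  then show ?case by (intro conjI) (use h in simp_all)
qed simp




lemma supp_T:
  fixes \<mu> :: "'a::ab_group_add list \<Rightarrow> 'a" and scale :: "'k::field \<Rightarrow> 'a \<Rightarrow> 'a"
    and U :: "nat \<Rightarrow> 'a"
  assumes ml: "mlin scale \<mu> d" and d2: "2 \<le> d"
    and U: "\<forall>n. U n \<noteq> 0 \<longrightarrow> n = 1 \<or> n = d \<or> n = M"
  shows "Tmap (cmul \<mu>) d q U n \<noteq> 0 \<Longrightarrow>
     1 \<le> q \<and> (d - 1) dvd (q - 1) \<and> (\<exists>a b c. a + b + c = q \<and> n = a + d * b + M * c)"
proof (induct q arbitrary: n rule: less_induct)
  case (less q)
  consider "q = 0" | "q = 1" | "2 \<le> q" by linarith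
  then show ?case
  proof cases
    case 1
    then show ?thesis using less.prems by simp
  next
    case 2
    then have "U n \<noteq> 0" using less.prems by simp
    then have "n = 1 \<or> n = d \<or> n = M" using U by auto
    then have "\<exists>a b c. a + b + c = 1 \<and> n = a + d * b + M * c"
    proof (elim disjE)
      assume nv: "n = 1" show ?thesis by (rule exI[where x="1::nat"], rule exI[where x="0::nat"], rule exI[where x="0::nat"]) (simp add: nv)
    next
      assume nv: "n = d" show ?thesis by (rule exI[where x="0::nat"], rule exI[where x="1::nat"], rule exI[where x="0::nat"]) (simp add: nv)
    next
      assume nv: "n = M" show ?thesis by (rule exI[where x="0::nat"], rule exI[where x="0::nat"], rule exI[where x="1::nat"]) (simp add: nv)
    qed
    with 2 show ?thesis by simp
  next
    case 3
    let ?T = "\<lambda>i. Tmap (cmul \<mu>) d i U"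
    let ?I = "{is. length is = d \<and> (\<forall>i\<in>set is. 0 < i \<and> i < q) \<and> sum_list is = q}"
    have "(\<Sum>is\<in>?I. cmul \<mu> (map ?T is) n) \<noteq> 0"
      using less.prems unfolding Tmap_ge2[OF 3] sum_fun_apply .
    then obtain "is" where isI: "is \<in> ?I" "cmul \<mu> (map ?T is) n \<noteq> 0"
      by (meson sum.not_neutral_contains_not_neutral)
    have ml': "mlin scale \<mu> (length (map ?T is))" using isI ml by simp
    have len: "length is = d" and sq: "sum_list is = q" using isI(1) by auto
    from cmul_nz[OF ml' isI(2)] obtain js where
      js0: "length js = length (map ?T is)" "sum_list js = n"
         "\<forall>k<length (map ?T is). (map ?T is ! k) (js ! k) \<noteq> 0" by blast
    have js: "length js = d" "sum_list js = n" "\<forall>k<d. ?T (is ! k) (js ! k) \<noteq> 0"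
      using js0 len by auto
    have IH: "1 \<le> is ! k \<and> (d - 1) dvd (is ! k - 1) \<and> (\<exists>a b c. a + b + c = is ! k \<and> js ! k = a + d * b + M * c)"
      if "k < d" for k
    proof (rule less.hyps)
      show "is ! k < q" using that isI(1) by auto
      show "?T (is ! k) (js ! k) \<noteq> 0" using js(3) that by blast
    qed
    have "\<forall>k<length is. \<exists>a b c. a + b + c = is ! k \<and> js ! k = a + d * b + M * c"
      using IH len by blast
    from comb_sp[OF _ this] len js(1)
    have ex: "\<exists>a b c. a + b + c = sum_list is \<and> sum_list js = a + d * b + M * c" by simp
    have "\<forall>i\<in>set is. 1 \<le> i \<and> (d - 1) dvd (i - 1)"
      using IH len by (metis in_set_conv_nth)
    from comb_dvd[OF this] len sq have dv: "(d - 1) dvd (q - d)" "d \<le> q" by auto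
    have "q - 1 = (q - d) + (d - 1)" using dv(2) d2 by simp
    then have "(d - 1) dvd (q - 1)" using dvd_add[OF dv(1), of "d - 1"] by simp
    then show ?thesis using ex sq js(2) 3 by simp
  qed
qed




lemma bnd_T:
  fixes \<mu> :: "'a::ab_group_add list \<Rightarrow> 'a" and scale :: "'k::field \<Rightarrow> 'a \<Rightarrow> 'a"
    and U :: "nat \<Rightarrow> 'a"
  assumes ml: "mlin scale \<mu> d" and d2: "2 \<le> d" and dM: "d \<le> M"
    and U: "\<forall>n. U n \<noteq> 0 \<longrightarrow> n = 1 \<or> n = d \<or> n = M"
  shows "bnd (M * q) (Tmap (cmul \<mu>) d q U)"
  unfolding bnd_def
proof (intro allI impI; rule ccontr)
  fix n assume n: "M * q < n" "Tmap (cmul \<mu>) d q U n \<noteq> 0"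
  then obtain a b c where "a + b + c = q" "n = a + d * b + M * c"
    using supp_T[OF ml d2 U] by blast
  moreover have "a \<le> M * a" "d * b \<le> M * b" using dM d2 by auto
  ultimately have "n \<le> M * a + M * b + M * c" by linarith
  also have "\<dots> = M * q" using \<open>a + b + c = q\<close> by (metis distrib_left)
  finally have "n \<le> M * q" .
  with n show False by simp
qed

lemma ev_T:
  fixes \<mu> :: "'a::ab_group_add list \<Rightarrow> 'a" and scale :: "'k::field \<Rightarrow> 'a \<Rightarrow> 'a"
    and U :: "nat \<Rightarrow> 'a"
  assumes vs: "vector_space scale" and ml: "mlin scale \<mu> d" and d2: "2 \<le> d" and dM: "d \<le> M"
    and U: "\<forall>n. U n \<noteq> 0 \<longrightarrow> n = 1 \<or> n = d \<or> n = M"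
  shows "d * q * M \<le> N \<Longrightarrow> ev scale c N (Tmap (cmul \<mu>) d q U) = Tmap \<mu> d q (ev scale c N U)"
proof (induct q rule: less_induct)
  case (less q)
  consider "q = 0" | "q = 1" | "2 \<le> q" by linarith
  then show ?case
  proof cases
    case 1
    interpret vector_space scale by (rule vs)
    show ?thesis unfolding ev_def using 1 by simp
  next
    case 2
    then show ?thesis by simp
  next
    case 3
    let ?T = "\<lambda>i. Tmap (cmul \<mu>) d i U"
    let ?I = "{is. length is = d \<and> (\<forall>i\<in>set is. 0 < i \<and> i < q) \<and> sum_list is = q}"
    have "ev scale c N (?T q) = (\<Sum>is\<in>?I. ev scale c N (cmul \<mu> (map ?T is)))"
      unfolding Tmap_ge2[OF 3] by (rule ev_sum[OF vs])
    also have "\<dots> = (\<Sum>is\<in>?I. \<mu> (map (\<lambda>i. Tmap \<mu> d i (ev scale c N U)) is))"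
    proof (rule sum.cong[OF refl])
      fix "is" assume isI: "is \<in> ?I"
      have b: "\<forall>P\<in>set (map ?T is). bnd (M * q) P"
      proof
        fix P assume "P \<in> set (map ?T is)"
        then obtain i where i: "i \<in> set is" "P = ?T i" by auto
        then have "bnd (M * i) P" using bnd_T[OF ml d2 dM U] by simp
        moreover have "M * i \<le> M * q" using i isI by auto
        ultimately show "bnd (M * q) P" unfolding bnd_def by (meson le_less_trans)
      qed
      have "ev scale c N (cmul \<mu> (map ?T is)) = \<mu> (map (ev scale c N) (map ?T is))"
        by (rule ev_hom[OF vs]) (use ml isI b less.prems in \<open>auto simp: algebra_simps\<close>)
      also have "map (ev scale c N) (map ?T is) = map (\<lambda>i. Tmap \<mu> d i (ev scale c N U)) is"
      proof (rule nth_equalityI)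
        fix k assume "k < length (map (ev scale c N) (map ?T is))"
        then have k: "is ! k \<in> set is" by auto
        then have "is ! k < q" using isI by auto
        moreover have "d * (is ! k) * M \<le> N"
          using less.prems \<open>is ! k < q\<close> by (meson le_trans less_imp_le_nat mult_le_mono1 mult_le_mono2)
        ultimately show "map (ev scale c N) (map ?T is) ! k = map (\<lambda>i. Tmap \<mu> d i (ev scale c N U)) is ! k"
          using less.hyps \<open>k < _\<close> by simp
      qed simp
      finally show "ev scale c N (cmul \<mu> (map ?T is)) = \<mu> (map (\<lambda>i. Tmap \<mu> d i (ev scale c N U)) is)" .
    qed
    also have "\<dots> = Tmap \<mu> d q (ev scale c N U)" by (rule Tmap_ge2[OF 3, symmetric])
    finally show ?thesis .
  qed
qed



lemma sum_rep_upd: "k < r \<Longrightarrow> sum_list ((replicate r (1::nat))[k := v]) = v + (r - 1)"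
  by (simp add: sum_list_update sum_list_replicate)

lemma elem_plus_le:
  assumes "\<forall>i\<in>set js. 1 \<le> i" "k < length js"
  shows "js ! k + (length js - 1) \<le> sum_list (js :: nat list)"
proof -
  have m: "js ! k \<in> set js" using assms(2) by simp
  have "sum_list js = js ! k + sum_list (remove1 (js ! k) js)"
    using sum_list_map_remove1[OF m, of id] by simp
  moreover have "length (remove1 (js ! k) js) \<le> sum_list (remove1 (js ! k) js)"
    using assms(1) sum_list_ge_length by (metis notin_set_remove1)
  moreover have "length (remove1 (js ! k) js) = length js - 1" using m by (simp add: length_remove1)
  ultimately show ?thesis by simp
qed

lemma two_le:
  assumes "k1 < length js" "k2 < length js" "k1 \<noteq> k2"
  shows "js ! k1 + js ! k2 \<le> sum_list (js :: nat list)"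
proof -
  have "js ! k1 + js ! k2 = (\<Sum>k\<in>{k1, k2}. js ! k)" using assms by simp
  also have "\<dots> \<le> (\<Sum>k\<in>{0..<length js}. js ! k)"
    by (rule sum_mono2) (use assms in auto)
  also have "\<dots> = sum_list js" by (rule sum_list_sum_nth[symmetric])
  finally show ?thesis .
qed

lemma calc:
  fixes g :: "'a::ab_group_add list \<Rightarrow> 'a" and scale :: "'k::field \<Rightarrow> 'a \<Rightarrow> 'a" and W :: "nat \<Rightarrow> 'a"
  assumes ml: "mlin scale g r" and r2: "2 \<le> r" and M2: "2 \<le> M" and W0: "W 0 = 0"
    and Wz: "\<forall>j. 1 < j \<and> j < M \<and> j < n \<longrightarrow> W j = 0" and n: "n < 2 * M"
  shows "cmul g (replicate r W) n = (if n = r then g (replicate r (W 1)) else 0)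
     + (if M + r - 1 \<le> n then (\<Sum>k<r. g ((replicate r (W 1))[k := W (n - r + 1)])) else 0)"
proof -
  define f where "f js = g (map W js)" for js
  define e where "e = n - r + 1"
  define A where "A = (if n = r then {replicate r (1::nat)} else {})"
  define B where "B = (if M + r - 1 \<le> n then (\<lambda>k. (replicate r (1::nat))[k := e]) ` {..<r} else {})"
  have C0: "cmul g (replicate r W) n = (\<Sum>js\<in>Tup r n. f js)"
    unfolding cmul_tup f_def by (intro sum.cong refl) (auto simp: Tup_def map_idx_rep)
  have sub: "A \<union> B \<subseteq> Tup r n"
    unfolding A_def B_def Tup_def e_def using r2 M2 by (auto simp: sum_list_update sum_list_replicate)
  have disj: "A \<inter> B = {}"
  proof -
    have "(replicate r (1::nat))[k := e] \<noteq> replicate r 1" if "k < r" "M + r - 1 \<le> n" for k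
    proof
      assume "(replicate r (1::nat))[k := e] = replicate r 1"
      then have "((replicate r (1::nat))[k := e]) ! k = replicate r 1 ! k" by simp
      then show False using that M2 unfolding e_def by simp
    qed
    then show ?thesis unfolding A_def B_def using M2 by auto
  qed
  have out: "\<forall>js\<in>Tup r n - (A \<union> B). f js = 0"
  proof
    fix js assume js: "js \<in> Tup r n - (A \<union> B)"
    show "f js = 0"
    proof (rule ccontr)
      assume fnz: "f js \<noteq> 0"
      have len: "length js = r" and sm: "sum_list js = n" using js unfolding Tup_def by auto
      have nz: "W (js ! k) \<noteq> 0" if "k < r" for k
      proof
        assume "W (js ! k) = 0"
        then have "g (map W js) = 0" by (intro mlin_zero[OF ml, of _ k]) (use that len in auto)
        with fnz show False unfolding f_def by simp
      qed
      have pos: "\<forall>i\<in>set js. 1 \<le> i"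
        using nz W0 len by (metis in_set_conv_nth less_one not_le)
      have small: "js ! k + (r - 1) \<le> n" if "k < r" for k
        using elem_plus_le[OF pos, of k] that len sm by simp
      have cases: "js ! k = 1 \<or> M \<le> js ! k" if "k < r" for k
      proof -
        have "js ! k < n" using small[OF that] r2 by simp
        moreover have "1 \<le> js ! k" using pos that len by auto
        ultimately show ?thesis using Wz nz[OF that] by (metis le_neq_implies_less not_le)
      qed
      have atmost: "k1 = k2" if "k1 < r" "k2 < r" "M \<le> js ! k1" "M \<le> js ! k2" for k1 k2
      proof (rule ccontr)
        assume "k1 \<noteq> k2"
        then have "js ! k1 + js ! k2 \<le> n" using two_le[of k1 js k2] that len sm by simp
        with that n show False by simp
      qed
      show False
      proof (cases "\<exists>k<r. M \<le> js ! k")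
        case False
        then have "js = replicate r 1"
          using cases len by (intro nth_equalityI) (auto simp: not_le, metis not_le)
        then have "n = r" using sm by (simp add: sum_list_replicate)
        then show False using js \<open>js = replicate r 1\<close> unfolding A_def by simp
      next
        case True
        then obtain k0 where k0: "k0 < r" "M \<le> js ! k0" by auto
        have eqjs: "js = (replicate r 1)[k0 := js ! k0]"
        proof (rule nth_equalityI)
          show "length js = length ((replicate r 1)[k0 := js ! k0])" using len by simp
          fix k assume "k < length js"
          then show "js ! k = (replicate r 1)[k0 := js ! k0] ! k"
            using cases atmost k0 len by (cases "k = k0") auto
        qed
        then have "sum_list js = js ! k0 + (r - 1)" using sum_rep_upd[OF k0(1)] by metis
        then have "js ! k0 = e" "M + r - 1 \<le> n" using sm k0 M2 r2 unfolding e_def by auto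
        then have "js \<in> B" unfolding B_def using eqjs k0(1) by auto
        then show False using js by simp
      qed
    qed
  qed
  have "(\<Sum>js\<in>Tup r n. f js) = (\<Sum>js\<in>A \<union> B. f js)"
    by (rule sum.mono_neutral_right[OF finite_Tup sub out])
  also have "\<dots> = (\<Sum>js\<in>A. f js) + (\<Sum>js\<in>B. f js)"
    by (rule sum.union_disjoint) (use disj in \<open>auto simp: A_def B_def\<close>)
  also have "(\<Sum>js\<in>A. f js) = (if n = r then g (replicate r (W 1)) else 0)"
    unfolding A_def f_def by simp
  also have "(\<Sum>js\<in>B. f js) = (if M + r - 1 \<le> n then (\<Sum>k<r. g ((replicate r (W 1))[k := W (n - r + 1)])) else 0)"
  proof (cases "M + r - 1 \<le> n")
    case True
    have inj: "inj_on (\<lambda>k. (replicate r (1::nat))[k := e]) {..<r}"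
    proof (rule inj_onI)
      fix k1 k2 assume k: "k1 \<in> {..<r}" "k2 \<in> {..<r}"
        "(replicate r (1::nat))[k1 := e] = (replicate r 1)[k2 := e]"
      then have "((replicate r (1::nat))[k1 := e]) ! k1 = ((replicate r 1)[k2 := e]) ! k1" by simp
      then have h: "e = (if k1 = k2 then e else 1)" using k(1,2) by (auto simp: nth_list_update split: if_splits)
      moreover have "e \<noteq> 1" using True M2 unfolding e_def by simp
      ultimately show "k1 = k2" by metis
    qed
    have "(\<Sum>js\<in>B. f js) = (\<Sum>k<r. f ((replicate r 1)[k := e]))"
      unfolding B_def using True sum.reindex[OF inj] by simp
    also have "\<dots> = (\<Sum>k<r. g ((replicate r (W 1))[k := W (n - r + 1)]))"
      unfolding f_def e_def by (simp add: map_update)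
    finally show ?thesis using True by simp
  qed (simp add: B_def)
  finally show ?thesis using C0 by simp
qed



lemma sm_mlin:
  assumes "symmetric_multilinear scale d \<mu>"
  shows "mlin scale \<mu> d"
  using assms unfolding symmetric_multilinear_def mlin_def module_hom_iff_linear by blast

lemma sym_ad:
  assumes sm: "symmetric_multilinear scale d \<mu>" and k: "k < d"
  shows "\<mu> ((replicate d x)[k := z]) = ad \<mu> d x z"
proof -
  define xs where "xs = (replicate d x)[k := z]"
  define \<sigma> where "\<sigma> = Transposition.transpose k (d - 1)"
  have len: "length xs = d" unfolding xs_def by simp
  have perm: "\<sigma> permutes {..<d}" unfolding \<sigma>_def using k by (intro permutes_swap_id) auto
  have "\<mu> (map (\<lambda>i. xs ! \<sigma> i) [0..<d]) = \<mu> xs"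
    using sm len perm unfolding symmetric_multilinear_def by blast
  moreover have "map (\<lambda>i. xs ! \<sigma> i) [0..<d] = replicate (d - 1) x @ [z]"
  proof (rule nth_equalityI)
    fix i assume "i < length (map (\<lambda>i. xs ! \<sigma> i) [0..<d])"
    then have i: "i < d" by simp
    show "map (\<lambda>i. xs ! \<sigma> i) [0..<d] ! i = (replicate (d - 1) x @ [z]) ! i"
      using i k unfolding xs_def \<sigma>_def
      by (auto simp: nth_append transpose_def nth_list_update)
  qed (use k in simp)
  ultimately show ?thesis unfolding xs_def ad_def by simp
qed

lemma ad_scale:
  fixes scale :: "'k::field \<Rightarrow> 'a::ab_group_add \<Rightarrow> 'a"
  assumes sm: "symmetric_multilinear scale d \<mu>" and d1: "1 \<le> d"
  shows "ad \<mu> d x (scale c z) = scale c (ad \<mu> d x z)"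
proof -
  have "module_hom scale scale (\<lambda>v. \<mu> ((replicate (d - 1) x @ [z])[d - 1 := v]))"
    using sm_mlin[OF sm] d1 unfolding mlin_def by simp
  moreover have "(replicate (d - 1) x @ [z])[d - 1 := v] = replicate (d - 1) x @ [v]" for v
    by (simp add: list_update_append)
  ultimately have "module_hom scale scale (\<lambda>v. \<mu> (replicate (d - 1) x @ [v]))" by simp
  then show ?thesis unfolding ad_def by (rule module_hom.scale)
qed



lemma arith_F4:
  fixes a b c q d p M K m :: nat
  assumes d2: "2 \<le> d" and q: "1 \<le> q" "q < p" and dv: "(d - 1) dvd (q - 1)"
    and abc: "a + b + c = q" and eq: "M + K * (d - 1) = a + d * b + M * c"
    and m: "m = (p - 2) div (d - 1)" and K: "K = d * m + 1"
    and M1: "d * p < M" and M2: "K * (d - 1) < M"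
  shows False
proof -
  have adb: "a + d * b \<le> d * (a + b)" using d2 by (simp add: algebra_simps)
  consider "c = 0" | "c = 1" | "2 \<le> c" by linarith
  then show False
  proof cases
    case 1
    then have "a + d * b \<le> d * q" using adb abc by simp
    also have "\<dots> \<le> d * p" using q by simp
    finally show False using eq 1 M1 by simp
  next
    case 3
    have "M * 2 \<le> M * c" using 3 by (rule mult_le_mono2)
    then show False using eq M2 by linarith
  next
    case 2
    then have j: "K * (d - 1) = a + d * b" using eq by simp
    obtain t where t: "q - 1 = (d - 1) * t" using dv by (auto elim: dvdE)
    have "(d - 1) * t \<le> p - 2" using t q by simp
    then have "((d - 1) * t) div (d - 1) \<le> (p - 2) div (d - 1)" by (rule div_le_mono)
    then have tm: "t \<le> m" using d2 m by simp
    have "q - 1 = a + b" using abc 2 by simp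
    then have "K * (d - 1) \<le> d * (q - 1)" using j adb by simp
    also have "\<dots> = d * (d - 1) * t" using t by simp
    also have "\<dots> \<le> d * (d - 1) * m" using tm by simp
    finally have "(d * m + 1) * (d - 1) \<le> d * (d - 1) * m" using K by simp
    moreover obtain e where e: "d = Suc e" "1 \<le> e" using d2 by (metis Suc_diff_Suc Suc_le_lessD diff_Suc_1 le_add_diff_inverse less_imp_le_nat plus_1_eq_Suc Suc_1 Suc_le_mono)
    ultimately have "(d * m + 1) * e \<le> d * e * m" by simp
    then show False using e(2) by (simp add: algebra_simps)
  qed
qed



lemma main_engel:
  fixes scale :: "'k::field_char_0 \<Rightarrow> 'a::ab_group_add \<Rightarrow> 'a" and \<mu> :: "'a list \<Rightarrow> 'a"
  assumes vs: "vector_space scale" and d2: "2 \<le> d" and sm: "symmetric_multilinear scale d \<mu>"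
    and p2: "2 \<le> p" and nil: "\<forall>x q. p \<le> q \<longrightarrow> Tmap \<mu> d q x = 0"
  shows "(ad \<mu> d x ^^ (d * ((p - 2) div (d - 1)) + 1)) y = 0"
proof -
  interpret vector_space scale by (rule vs)
  have ml: "mlin scale \<mu> d" by (rule sm_mlin[OF sm])
  define m where "m = (p - 2) div (d - 1)"
  define K where "K = d * m + 1"
  define M where "M = d * p + K * (d - 1) + d + 2"
  define H where "H = \<mu> (replicate d x)"
  define U where "U n = (if n = 1 then x else if n = d then - H else if n = M then y else 0)" for n
  have Mf: "d < M" "2 \<le> M" "d * p < M" "K * (d - 1) < M" "d \<le> M" unfolding M_def by auto
  have Usupp: "\<forall>n. U n \<noteq> 0 \<longrightarrow> n = 1 \<or> n = d \<or> n = M" unfolding U_def by auto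
  have bU: "bnd M U" unfolding bnd_def U_def using Mf by auto
  define T where "T q = Tmap (cmul \<mu>) d q U" for q
  define W where "W = (\<Sum>q<p. T q)"
  have Wapp: "W n = (\<Sum>q<p. T q n)" for n unfolding W_def by (rule sum_fun_apply)
  have T0: "T q 0 = 0" for q
  proof (rule ccontr)
    assume "T q 0 \<noteq> 0"
    then obtain a b c where "1 \<le> q" "a + b + c = q" "0 = a + d * b + M * c"
      using supp_T[OF ml d2 Usupp] unfolding T_def by blast
    then show False using d2 Mf by auto
  qed
  have W0: "W 0 = 0" unfolding Wapp T0 by simp
  have bT: "bnd (M * p) (T q)" if "q < p" for q
  proof -
    have "bnd (M * q) (T q)" unfolding T_def by (rule bnd_T[OF ml d2 Mf(5) Usupp])
    moreover have "M * q \<le> M * p" using that by simp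
    ultimately show ?thesis unfolding bnd_def by (meson le_less_trans)
  qed
  have bW: "bnd (M * p) W" using bT unfolding bnd_def Wapp by simp
  define N where "N = d * p * M * d"
  define R where "R = U + cmul \<mu> (replicate d W)"
  have bC: "bnd (M * p * d) (cmul \<mu> (replicate d W))"
    using bnd_cmul[of scale \<mu> "replicate d W" "M * p"] ml bW by simp
  have bWR: "bnd N (W - R)"
  proof -
    have "M * p \<le> N" "M \<le> N" "M * p * d \<le> N" using p2 d2 unfolding N_def by (simp_all add: algebra_simps)
    then show ?thesis using bW bU bC unfolding bnd_def R_def by auto
  qed
  have evWR: "ev scale c N (W - R) = 0" for c
  proof -
    define u where "u = ev scale c N U"
    have eW: "ev scale c N W = (\<Sum>q<p. Tmap \<mu> d q u)"
      unfolding W_def ev_sum[OF vs] u_def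
    proof (rule sum.cong[OF refl])
      fix q assume "q \<in> {..<p}"
      then have "d * q \<le> d * p" by simp
      then have "d * q * M \<le> d * p * M" by (rule mult_le_mono1)
      also have "\<dots> \<le> d * p * M * d" using d2 by simp
      finally have "d * q * M \<le> N" unfolding N_def .
      then show "ev scale c N (T q) = Tmap \<mu> d q (ev scale c N U)"
        unfolding T_def by (rule ev_T[OF vs ml d2 Mf(5) Usupp])
    qed
    have eC: "ev scale c N (cmul \<mu> (replicate d W)) = \<mu> (replicate d (ev scale c N W))"
    proof -
      have "ev scale c N (cmul \<mu> (replicate d W)) = \<mu> (map (ev scale c N) (replicate d W))"
        by (rule ev_hom[OF vs]) (use ml bW in \<open>auto simp: N_def algebra_simps\<close>)
      then show ?thesis by simp
    qed
    have A: "(\<Sum>q<p. Tmap \<mu> d q u) = u + \<mu> (replicate d (\<Sum>q<p. Tmap \<mu> d q u))"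
      by (rule A_level[OF vs d2 ml]) (use p2 nil in auto)
    show ?thesis unfolding ev_diff[OF vs] R_def ev_add[OF vs] eC eW
      using A u_def by simp
  qed
  have WR: "W = R" using poly_zero_fun[OF vs bWR] evWR by simp
  have F2: "W n = U n + cmul \<mu> (replicate d W) n" for n
    using fun_cong[OF WR, of n] unfolding R_def by simp
  have low: "W n = (if n = 1 then x else 0)" if "n < M" for n
    using that
  proof (induct n rule: less_induct)
    case (less n)
    have Wz: "\<forall>j. 1 < j \<and> j < M \<and> j < n \<longrightarrow> W j = 0" using less.hyps less.prems by auto
    have C: "cmul \<mu> (replicate d W) n = (if n = d then \<mu> (replicate d (W 1)) else 0)"
    proof -
      have ng: "\<not> M + d - 1 \<le> n" using less.prems d2 by linarith
      have n2: "n < 2 * M" using less.prems by simp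
      show ?thesis using calc[OF ml d2 Mf(2) W0 Wz n2] ng by simp
    qed
    show ?case
    proof (cases "n = d")
      case True
      have "W 1 = x" using less.hyps[of 1] True d2 less.prems by simp
      then show ?thesis using F2[of n] C True d2 Mf unfolding U_def H_def by simp
    next
      case False
      then show ?thesis using F2[of n] C less.prems Mf W0 unfolding U_def by auto
    qed
  qed
  have W1: "W 1 = x" using low[of 1] Mf by simp
  have Wz: "\<forall>j. 1 < j \<and> j < M \<and> j < n \<longrightarrow> W j = 0" for n using low by auto
  have high: "W n = (if n = M then y else 0) + (if M + d - 1 \<le> n then (\<Sum>k<d. ad \<mu> d x (W (n - d + 1))) else 0)"
    if "M \<le> n" "n < 2 * M" for n
  proof -
    have "cmul \<mu> (replicate d W) n = (if M + d - 1 \<le> n then (\<Sum>k<d. \<mu> ((replicate d x)[k := W (n - d + 1)])) else 0)"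
      using calc[OF ml d2 Mf(2) W0 Wz that(2)] that Mf W1 by simp
    also have "\<dots> = (if M + d - 1 \<le> n then (\<Sum>k<d. ad \<mu> d x (W (n - d + 1))) else 0)"
      using sym_ad[OF sm] by simp
    finally show ?thesis using F2[of n] that Mf unfolding U_def by simp
  qed
  have V: "W (M + i * (d - 1)) = scale (of_nat d ^ i) ((ad \<mu> d x ^^ i) y)" if "i * (d - 1) < M" for i
    using that
  proof (induct i)
    case 0
    show ?case using high[of M] Mf d2 by simp
  next
    case (Suc i)
    let ?n = "M + Suc i * (d - 1)"
    have ih: "W (M + i * (d - 1)) = scale (of_nat d ^ i) ((ad \<mu> d x ^^ i) y)"
      using Suc by simp
    have n1: "?n - d + 1 = M + i * (d - 1)" "M + d - 1 \<le> ?n" "?n \<noteq> M" "M \<le> ?n" "?n < 2 * M"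
    proof -
      obtain e where e0: "d = Suc e" using d2 by (cases d) auto
      have e: "d = Suc e" "1 \<le> e" using e0 d2 by auto
      have pe: "Suc i * e < M" using e Suc.prems by simp
      show "?n - d + 1 = M + i * (d - 1)" using e Mf(2) by simp
      show "M + d - 1 \<le> ?n" using e by simp
      show "?n \<noteq> M" using e by simp
      show "M \<le> ?n" by simp
      show "?n < 2 * M" using e pe by simp
    qed
    have "W ?n = (if ?n = M then y else 0) + (if M + d - 1 \<le> ?n then (\<Sum>k<d. ad \<mu> d x (W (?n - d + 1))) else 0)"
      by (rule high[OF n1(4,5)])
    also have "\<dots> = (\<Sum>k<d. ad \<mu> d x (W (M + i * (d - 1))))"
      by (simp only: if_not_P[OF n1(3)] if_P[OF n1(2)] n1(1) add_0)
    also have "\<dots> = scale (of_nat d) (ad \<mu> d x (W (M + i * (d - 1))))"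
      by (simp add: sum_constant_scale)
    also have "\<dots> = scale (of_nat d ^ Suc i) ((ad \<mu> d x ^^ Suc i) y)"
      unfolding ih using d2 ad_scale[OF sm, where c="of_nat d ^ i" and x=x and z="(ad \<mu> d x ^^ i) y"] by (simp add: mult.commute)
    finally show ?case .
  qed
  have "W (M + K * (d - 1)) = 0"
    unfolding Wapp
  proof (rule sum.neutral, rule ballI, rule ccontr)
    fix q assume q: "q \<in> {..<p}" and nz: "T q (M + K * (d - 1)) \<noteq> 0"
    then obtain a b c where "1 \<le> q" "(d - 1) dvd (q - 1)" "a + b + c = q"
      "M + K * (d - 1) = a + d * b + M * c"
      using supp_T[OF ml d2 Usupp] unfolding T_def by blast
    then show False
      using arith_F4[OF d2 _ _ _ _ _ m_def K_def Mf(3) Mf(4)] q by auto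
  qed
  then have "scale (of_nat d ^ K) ((ad \<mu> d x ^^ K) y) = 0" using V Mf(4) by simp
  then show ?thesis using d2 unfolding K_def m_def by simp
qed


theorem mainTheorem1:
  fixes scale :: "'k::field_char_0 \<Rightarrow> 'a::ab_group_add \<Rightarrow> 'a"
    and \<mu> :: "'a list \<Rightarrow> 'a" and d :: nat
  assumes "vector_space scale"
    and "d \<ge> 2"
    and "symmetric_multilinear scale d \<mu>"
  shows "(yagzhev_nil \<mu> d \<longrightarrow> engel \<mu> d) \<and>
         (\<forall>p. yagzhev_nil_of_nilindex \<mu> d p \<longrightarrow>
              n_engel \<mu> d (nat (int d * \<lfloor>(real p - 2) / (real d - 1)\<rfloor> + 1)))"
proof -
  have P2: "n_engel \<mu> d (nat (int d * \<lfloor>(real p - 2) / (real d - 1)\<rfloor> + 1))"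
    if Y: "yagzhev_nil_of_nilindex \<mu> d p" for p
  proof -
    have p0: "0 < p" and nil: "\<forall>x q. p \<le> q \<longrightarrow> Tmap \<mu> d q x = 0"
      using Y unfolding yagzhev_nil_of_nilindex_def by auto
    show ?thesis
    proof (cases "p = 1")
      case True
      have "\<forall>z::'a. z = 0" using nil True by (metis Tmap_1 One_nat_def le_refl)
      then show ?thesis unfolding n_engel_def by blast
    next
      case False
      then have p2: "2 \<le> p" using p0 by simp
      have "(real p - 2) / (real d - 1) = real (p - 2) / real (d - 1)"
        using p2 assms(2) by (simp add: of_nat_diff)
      then have "\<lfloor>(real p - 2) / (real d - 1)\<rfloor> = int ((p - 2) div (d - 1))"
        using floor_divide_of_nat_eq by simp
      then have "nat (int d * \<lfloor>(real p - 2) / (real d - 1)\<rfloor> + 1) = d * ((p - 2) div (d - 1)) + 1"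
        by (simp add: nat_add_distrib nat_mult_distrib)
      then show ?thesis unfolding n_engel_def
        using main_engel[OF assms(1) assms(2) assms(3) p2 nil] by simp
    qed
  qed
  have P1: "engel \<mu> d" if yn: "yagzhev_nil \<mu> d"
  proof -
    obtain p where "yagzhev_nil_of_nilindex \<mu> d p" using yn unfolding yagzhev_nil_def by blast
    then have ne: "n_engel \<mu> d (nat (int d * \<lfloor>(real p - 2) / (real d - 1)\<rfloor> + 1))" by (rule P2)
    have "n_engel \<mu> d (Suc (nat (int d * \<lfloor>(real p - 2) / (real d - 1)\<rfloor> + 1)))"
      using ne unfolding n_engel_def by (simp only: funpow_Suc_right comp_def) blast
    then show ?thesis unfolding engel_def by blast
  qed
  show ?thesis using P1 P2 by blast
qed

end
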